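(* Let $k=\mathbb R$ or $\mathbb C$, let $(V,g)$ be an inner product vector space over $k$, let $f\in\operatorname{End}_k(V)$, and let $\mathcal H_f=\{H_i\}_{i\in I}$ be a family of finite-dimensional $f$-invariant subspaces with $V=\bigoplus_{i\in I}H_i$; write $f_i=f|_{H_i}$ and $\widetilde{\mathcal H}_f^\perp=\bigoplus_{i\in I}[\operatorname{Ker} f_i]_i^\perp$. Then $\widetilde{\mathcal H}_f^\perp=[\operatorname{Ker} f]^\perp$ if and only if $[\operatorname{Ker} f_i]_i^\perp\subseteq\big[\sum_{j\ne i}\operatorname{Ker} f_j\big]^\perp$ for every $i\in I$.
   Context: An inner product is linear in the first argument, conjugate-symmetric and positive definite. $V=\bigoplus_{i\in I}H_i$ means the natural map $\bigoplus H_i\to V$ is an isomorphism. For a subspace $W\subseteq V$, $W^\perp=\{v\in V:g(w,v)=0\ \forall w\in W\}$; for a subspace $W\subseteq H_i$, $[W]_i^\perp=\{v\in H_i:g(w,v)=0\ \forall w\in W\}$. *)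

theory Defs
  imports Complex_Main
begin

text \<open>Inner product on a vector space with scalar multiplication scale over the
 field 'k (intended: real or complex), with conjugation cj (identity for real,
 cnj for complex): linear in the first argument, conjugate-symmetric, positive definite.\<close>
definition is_inner_product ::
  "('k::real_field \<Rightarrow> 'v::ab_group_add \<Rightarrow> 'v) \<Rightarrow> ('k \<Rightarrow> 'k) \<Rightarrow> ('v \<Rightarrow> 'v \<Rightarrow> 'k) \<Rightarrow> bool" where
  "is_inner_product scale cj g \<longleftrightarrow>
     (\<forall>a x y z. g (scale a x + y) z = a * g x z + g y z) \<and>
     (\<forall>x y. g x y = cj (g y x)) \<and>
     (\<forall>x. x \<noteq> 0 \<longrightarrow> (\<exists>r::real. r > 0 \<and> g x x = of_real r))"

definition fin_dim_subspace :: "('k::field \<Rightarrow> 'v::ab_group_add \<Rightarrow> 'v) \<Rightarrow> 'v set \<Rightarrow> bool" where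
  "fin_dim_subspace scale H \<longleftrightarrow>
     module.subspace scale H \<and> (\<exists>B. finite B \<and> B \<subseteq> H \<and> module.span scale B = H)"

text \<open>The whole space is the (internal, algebraic) direct sum of the family H over I:
 the natural map from the external direct sum is bijective.\<close>
definition is_direct_sum :: "'i set \<Rightarrow> ('i \<Rightarrow> 'v::comm_monoid_add set) \<Rightarrow> bool" where
  "is_direct_sum I H \<longleftrightarrow>
     (\<forall>v. \<exists>!x. (\<forall>i\<in>I. x i \<in> H i) \<and> (\<forall>i. i \<notin> I \<longrightarrow> x i = 0) \<and>
              finite {i. x i \<noteq> 0} \<and> v = (\<Sum>i\<in>{i. x i \<noteq> 0}. x i))"

definition fam_sum :: "'i set \<Rightarrow> ('i \<Rightarrow> 'v::comm_monoid_add set) \<Rightarrow> 'v set" where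
  "fam_sum I W = {v. \<exists>F x. finite F \<and> F \<subseteq> I \<and> (\<forall>i\<in>F. x i \<in> W i) \<and> v = sum x F}"

definition rker :: "('v \<Rightarrow> 'w::zero) \<Rightarrow> 'v set \<Rightarrow> 'v set" where
  "rker f H = {v \<in> H. f v = 0}"

text \<open>Orthogonal complement W^perp in V, and relative complement [W]_H^perp in H.\<close>
definition orth :: "('v \<Rightarrow> 'v \<Rightarrow> 'k::zero) \<Rightarrow> 'v set \<Rightarrow> 'v set" where
  "orth g W = {v. \<forall>w\<in>W. g w v = 0}"

definition orth_in :: "('v \<Rightarrow> 'v \<Rightarrow> 'k::zero) \<Rightarrow> 'v set \<Rightarrow> 'v set \<Rightarrow> 'v set" where
  "orth_in g H W = {v \<in> H. \<forall>w\<in>W. g w v = 0}"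

end

theory Submission imports Defs begin

lemma ex1_uniq: "\<exists>!x. P x \<Longrightarrow> P a \<Longrightarrow> P b \<Longrightarrow> a = b"
  by blast

locale sesq = vector_space scale for scale :: "'k::field \<Rightarrow> 'v::ab_group_add \<Rightarrow> 'v" +
  fixes cj :: "'k \<Rightarrow> 'k" and g :: "'v \<Rightarrow> 'v \<Rightarrow> 'k"
  assumes g_lin: "g (scale a x + y) z = a * g x z + g y z"
  and g_sym: "g x y = cj (g y x)"
  and g_pos: "x \<noteq> 0 \<Longrightarrow> g x x \<noteq> 0"
  and cj_add: "cj (a + b) = cj a + cj b"
  and cj_mult: "cj (a * b) = cj a * cj b"
  and cj_cj: "cj (cj a) = a"
begin

lemma cj0: "cj 0 = 0"
  using cj_add[of 0 0] by (metis add_cancel_right_right add_0)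

lemma cj_minus: "cj (a - b) = cj a - cj b"
  using cj_add[of "a - b" b] by (simp add: algebra_simps)

lemma g0l[simp]: "g 0 z = 0"
  using g_lin[of 1 0 0 z] by (metis add_cancel_right_right mult_1 scale_one add_0)

lemma g0r[simp]: "g z 0 = 0"
  using g_sym[of z 0] by (simp add: cj0)

lemma g_addl: "g (x + y) z = g x z + g y z"
  using g_lin[of 1 x y z] by simp

lemma g_scalel: "g (scale a x) z = a * g x z"
  using g_lin[of a x 0 z] by simp

lemma g_addr: "g z (x + y) = g z x + g z y"
  by (metis g_sym g_addl cj_add)

lemma g_scaler: "g z (scale a x) = cj a * g z x"
  by (metis g_sym g_scalel cj_mult)

lemma g_diffr: "g z (x - y) = g z x - g z y"
  by (metis g_sym cj_minus g_addl diff_add_cancel add_diff_cancel)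

lemma g_diffl: "g (x - y) z = g x z - g y z"
  by (metis g_addl diff_add_cancel add_diff_cancel)

lemma g_sumr: "g z (sum x F) = (\<Sum>i\<in>F. g z (x i))"
  by (induct F rule: infinite_finite_induct) (auto simp: g_addr)

lemma g_suml: "g (sum x F) z = (\<Sum>i\<in>F. g (x i) z)"
  by (induct F rule: infinite_finite_induct) (auto simp: g_addl)

lemma orth_span: assumes "\<forall>b\<in>B. g b u = 0" "w \<in> span B" shows "g w u = 0"
  using assms(2) by (induct rule: span_induct_alt) (use assms(1) in \<open>auto simp: g_lin\<close>)

lemma proj_fin: "finite B \<Longrightarrow> \<exists>k\<in>span B. \<forall>w\<in>span B. g w (v - k) = 0"
proof (induct B arbitrary: v rule: finite_induct)
  case empty
  then show ?case by (auto intro: span_zero)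
next
  case (insert b B)
  obtain kb where kb: "kb \<in> span B" "\<forall>w\<in>span B. g w (b - kb) = 0"
    using insert.hyps(3) by blast
  obtain k0 where k0: "k0 \<in> span B" "\<forall>w\<in>span B. g w (v - k0) = 0"
    using insert.hyps(3) by blast
  define u where "u = b - kb"
  show ?case
  proof (cases "u = 0")
    case True
    then have "b \<in> span B" using kb u_def by simp
    then have "span (insert b B) = span B" by (rule span_redundant)
    then show ?thesis using k0 by auto
  next
    case False
    define c where "c = cj (g u (v - k0) / g u u)"
    define k where "k = k0 + scale c u"
    have bin: "b \<in> span (insert b B)" by (rule span_base) simp
    have kbin: "kb \<in> span (insert b B)" using kb(1) span_mono[of B "insert b B"] by blast
    have uin: "u \<in> span (insert b B)" unfolding u_def using bin kbin by (rule span_diff)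
    have k0in: "k0 \<in> span (insert b B)" using k0(1) span_mono[of B "insert b B"] by blast
    have kin: "k \<in> span (insert b B)" unfolding k_def
      using uin k0in span_add span_scale by blast
    have e: "g w (v - k) = g w (v - k0) - cj c * g w u" for w
    proof -
      have "v - k = (v - k0) - scale c u" unfolding k_def by (simp add: algebra_simps)
      then show ?thesis by (simp only: g_diffr g_scaler)
    qed
    have gu: "g u u \<noteq> 0" using g_pos False by blast
    have "\<forall>w\<in>insert b B. g w (v - k) = 0"
    proof
      fix w assume w: "w \<in> insert b B"
      show "g w (v - k) = 0"
      proof (cases "w = b")
        case True
        have b: "b = u + kb" unfolding u_def by simp
        have 1: "g kb (v - k) = 0" using e[of kb] k0 kb u_def by simp
        have 2: "g u (v - k) = 0" using e[of u] gu unfolding c_def by (simp add: cj_cj)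
        show ?thesis using True b 1 2 g_addl by simp
      next
        case False
        then have "w \<in> span B" using w by (auto intro: span_base)
        then show ?thesis using e[of w] k0 kb u_def by simp
      qed
    qed
    then have "\<forall>w\<in>span (insert b B). g w (v - k) = 0"
      using orth_span by blast
    then show ?thesis using kin by blast
  qed
qed

lemma proj_sub:
  assumes "subspace K" "K \<subseteq> span T" "finite T"
  shows "\<exists>k\<in>K. \<forall>w\<in>K. g w (v - k) = 0"
proof -
  obtain B where B: "B \<subseteq> K" "independent B" "K \<subseteq> span B" "card B = dim K"
    by (rule basis_exists)
  have "finite B" using independent_span_bound[OF assms(3) B(2)] B(1) assms(2) by blast
  moreover have "span B = K" using span_subspace[OF B(1) B(3) assms(1)] .
  ultimately show ?thesis using proj_fin[of B v] by simp
qed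


lemma main:
  assumes lin: "Vector_Spaces.linear scale scale f"
  and HI: "\<forall>i\<in>I. fin_dim_subspace scale (H i) \<and> f ` H i \<subseteq> H i"
  and ds: "is_direct_sum I H"
  shows "fam_sum I (\<lambda>i. orth_in g (H i) (rker f (H i))) = orth g (rker f UNIV) \<longleftrightarrow>
             (\<forall>i\<in>I. orth_in g (H i) (rker f (H i))
                       \<subseteq> orth g (fam_sum (I - {i}) (\<lambda>j. rker f (H j))))"
proof -
  have mh: "module_hom scale scale f" using lin linear_iff_module_hom by blast
  have fadd: "f (x + y) = f x + f y" for x y using module_hom.add[OF mh] .
  have fsc: "f (scale c x) = scale c (f x)" for c x using module_hom.scale[OF mh] .
  have f0: "f 0 = 0" using module_hom.zero[OF mh] .
  have fsum: "f (sum x F) = (\<Sum>i\<in>F. f (x i))" for x and F :: "'a set" using module_hom.sum[OF mh] .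
  have fdiff: "f (x - y) = f x - f y" for x y using module_hom.diff[OF mh] .
  have sub: "subspace (H i)" if "i \<in> I" for i using HI that unfolding fin_dim_subspace_def by blast
  have fin: "\<exists>T. finite T \<and> H i \<subseteq> span T" if "i \<in> I" for i
  proof -
    have "\<exists>B. finite B \<and> B \<subseteq> H i \<and> span B = H i" using HI that unfolding fin_dim_subspace_def by blast
    then show ?thesis by auto
  qed
  have fH: "f x \<in> H i" if "i \<in> I" "x \<in> H i" for i x using HI that by blast
  define K where "K i = rker f (H i)" for i
  define P where "P i = orth_in g (H i) (K i)" for i
  define Kf where "Kf = rker f UNIV"
  have subK: "subspace (K i)" if "i \<in> I" for i
    unfolding K_def rker_def using sub[OF that] fH[OF that]
    by (intro subspaceI) (auto simp: subspace_0 subspace_add subspace_scale fadd fsc f0)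
  have KH: "K i \<subseteq> H i" for i unfolding K_def rker_def by auto
  have decomp: "\<exists>x. (\<forall>i\<in>I. x i \<in> H i) \<and> (\<forall>i. i \<notin> I \<longrightarrow> x i = 0) \<and>
              finite {i. x i \<noteq> 0} \<and> v = (\<Sum>i\<in>{i. x i \<noteq> 0}. x i)" for v
  proof -
    have "\<exists>!x. (\<forall>i\<in>I. x i \<in> H i) \<and> (\<forall>i. i \<notin> I \<longrightarrow> x i = 0) \<and>
              finite {i. x i \<noteq> 0} \<and> v = (\<Sum>i\<in>{i. x i \<noteq> 0}. x i)"
      using ds unfolding is_direct_sum_def by (rule spec)
    then show ?thesis by (rule ex1_implies_ex)
  qed
  have uniq0: "\<forall>i\<in>T. z i = 0" if T: "finite T" "T \<subseteq> I" "\<forall>i\<in>T. z i \<in> H i" "sum z T = 0" for T z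
  proof -
    define z' where "z' i = (if i \<in> T then z i else 0)" for i
    have supp: "{i. z' i \<noteq> 0} \<subseteq> T" unfolding z'_def by auto
    have fs: "finite {i. z' i \<noteq> 0}" using supp T(1) finite_subset by blast
    have "sum z' {i. z' i \<noteq> 0} = sum z' T"
      by (rule sum.mono_neutral_left[OF T(1) supp]) auto
    also have "\<dots> = sum z T" unfolding z'_def by simp
    finally have s0: "sum z' {i. z' i \<noteq> 0} = 0" using T(4) by simp
    have P1: "(\<forall>i\<in>I. z' i \<in> H i) \<and> (\<forall>i. i \<notin> I \<longrightarrow> z' i = 0) \<and>
              finite {i. z' i \<noteq> 0} \<and> 0 = (\<Sum>i\<in>{i. z' i \<noteq> 0}. z' i)"
      using T sub subspace_0 fs s0 unfolding z'_def by auto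
    have P2: "(\<forall>i\<in>I. (\<lambda>_. 0) i \<in> H i) \<and> (\<forall>i. i \<notin> I \<longrightarrow> (\<lambda>_. 0) i = 0) \<and>
              finite {i. (\<lambda>_. 0) i \<noteq> 0} \<and> 0 = (\<Sum>i\<in>{i. (\<lambda>_. 0) i \<noteq> 0}. (\<lambda>_. 0) i)"
      using sub subspace_0 by auto
    define Q where "Q x \<longleftrightarrow> (\<forall>i\<in>I. x i \<in> H i) \<and> (\<forall>i. i \<notin> I \<longrightarrow> x i = 0) \<and>
              finite {i. x i \<noteq> 0} \<and> (0::'v) = (\<Sum>i\<in>{i. x i \<noteq> 0}. x i)" for x :: "'a \<Rightarrow> 'v"
    have ex: "\<exists>!x. Q x"
      using ds unfolding is_direct_sum_def Q_def by (rule spec)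
    have q1: "Q z'" unfolding Q_def by (rule P1)
    have q2: "Q (\<lambda>_. 0)" unfolding Q_def using sub subspace_0 by auto
    have zz: "z' = (\<lambda>_. 0)" using ex q1 q2 by blast
    show ?thesis
    proof
      fix i assume i: "i \<in> T"
      have "z' i = 0" using zz by simp
      then show "z i = 0" using i unfolding z'_def by simp
    qed
  qed
  have Kfdec: "\<exists>S y. finite S \<and> S \<subseteq> I \<and> (\<forall>j\<in>S. y j \<in> K j) \<and> w = sum y S" if "w \<in> Kf" for w
  proof -
    obtain y where y: "\<forall>i\<in>I. y i \<in> H i" "\<forall>i. i \<notin> I \<longrightarrow> y i = 0"
      "finite {i. y i \<noteq> 0}" "w = (\<Sum>i\<in>{i. y i \<noteq> 0}. y i)" using decomp by blast
    define S where "S = {i. y i \<noteq> 0}"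
    have SI: "S \<subseteq> I" using y(2) S_def by auto
    have "sum (\<lambda>i. f (y i)) S = 0" using that y(4) fsum unfolding Kf_def rker_def S_def by auto
    then have "\<forall>i\<in>S. f (y i) = 0"
      using uniq0[of S "\<lambda>i. f (y i)"] y(1,3) SI fH unfolding S_def by blast
    then show ?thesis using y SI unfolding S_def K_def rker_def by (intro exI[of _ S] exI[of _ y]) (auto simp: S_def)
  qed
  have sumK: "sum y S \<in> Kf" if "\<forall>j\<in>S. y j \<in> K j" for y and S :: "'a set"
    using that fsum unfolding Kf_def K_def rker_def by auto
  have famK: "fam_sum J K \<subseteq> Kf" for J unfolding fam_sum_def using sumK by blast
  have subset: "fam_sum I P \<subseteq> orth g Kf"
    if hyp: "\<forall>i\<in>I. P i \<subseteq> orth g (fam_sum (I - {i}) K)"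
  proof
    fix v assume "v \<in> fam_sum I P"
    then obtain F x where F: "finite F" "F \<subseteq> I" "\<forall>i\<in>F. x i \<in> P i" "v = sum x F"
      unfolding fam_sum_def by blast
    show "v \<in> orth g Kf" unfolding orth_def mem_Collect_eq
    proof (intro ballI)
      fix w assume "w \<in> Kf"
      then obtain S y where S: "finite S" "S \<subseteq> I" "\<forall>j\<in>S. y j \<in> K j" "w = sum y S"
        using Kfdec by blast
      have "g (y j) (x i) = 0" if "i \<in> F" "j \<in> S" for i j
      proof (cases "j = i")
        case True
        then show ?thesis using F(3) S(3) that unfolding P_def orth_in_def by auto
      next
        case False
        have "y j \<in> fam_sum (I - {i}) K"
          unfolding fam_sum_def using False S that
          by (intro CollectI exI[of _ "{j}"] exI[of _ y]) auto
        moreover have "x i \<in> orth g (fam_sum (I - {i}) K)" using hyp F that by blast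
        ultimately show ?thesis unfolding orth_def by blast
      qed
      then show "g w v = 0" using S(4) F(4) by (simp add: g_suml g_sumr)
    qed
  qed
  show ?thesis unfolding K_def[symmetric] P_def[symmetric] Kf_def[symmetric]
  proof
    assume eq: "fam_sum I P = orth g Kf"
    show "\<forall>i\<in>I. P i \<subseteq> orth g (fam_sum (I - {i}) K)"
    proof (intro ballI subsetI)
      fix i p assume i: "i \<in> I" and p: "p \<in> P i"
      have "p \<in> fam_sum I P" unfolding fam_sum_def using i p
        by (intro CollectI exI[of _ "{i}"] exI[of _ "\<lambda>_. p"]) auto
      then have "p \<in> orth g Kf" using eq by simp
      then show "p \<in> orth g (fam_sum (I - {i}) K)" using famK unfolding orth_def by blast
    qed
  next
    assume hyp: "\<forall>i\<in>I. P i \<subseteq> orth g (fam_sum (I - {i}) K)"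
    show "fam_sum I P = orth g Kf"
    proof
      show "fam_sum I P \<subseteq> orth g Kf" using subset hyp by blast
    next
      show "orth g Kf \<subseteq> fam_sum I P"
      proof
        fix v assume v: "v \<in> orth g Kf"
        obtain x where x: "\<forall>i\<in>I. x i \<in> H i" "\<forall>i. i \<notin> I \<longrightarrow> x i = 0"
          "finite {i. x i \<noteq> 0}" "v = (\<Sum>i\<in>{i. x i \<noteq> 0}. x i)" using decomp by blast
        define S where "S = {i. x i \<noteq> 0}"
        have SI: "S \<subseteq> I" using x(2) S_def by auto
        have "\<forall>i\<in>S. \<exists>k. k \<in> K i \<and> (\<forall>w\<in>K i. g w (x i - k) = 0)"
        proof
          fix i assume "i \<in> S"
          then have i: "i \<in> I" using SI by auto
          obtain T where "finite T" "H i \<subseteq> span T" using fin[OF i] by blast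
          then show "\<exists>k. k \<in> K i \<and> (\<forall>w\<in>K i. g w (x i - k) = 0)"
            using proj_sub[OF subK[OF i], of T] KH by blast
        qed
        from bchoice[OF this] obtain kf where kf: "\<forall>i\<in>S. kf i \<in> K i \<and> (\<forall>w\<in>K i. g w (x i - kf i) = 0)"
          by blast
        define pp where "pp = (\<Sum>i\<in>S. x i - kf i)"
        define kk where "kk = (\<Sum>i\<in>S. kf i)"
        have vsum: "v = kk + pp" unfolding pp_def kk_def x(4) S_def[symmetric]
          by (simp add: sum_subtractf)
        have "pp \<in> fam_sum I P" unfolding fam_sum_def pp_def
        proof (intro CollectI exI conjI)
          show "finite S" using x(3) S_def by simp
          show "S \<subseteq> I" by (rule SI)
          show "\<forall>i\<in>S. x i - kf i \<in> P i"
          proof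
            fix i assume iS: "i \<in> S"
            then have i: "i \<in> I" using SI by auto
            have "x i - kf i \<in> H i" using subspace_diff[OF sub[OF i]] x(1) i kf iS KH by blast
            then show "x i - kf i \<in> P i" using kf iS unfolding P_def orth_in_def by auto
          qed
        qed simp
        then have ppo: "pp \<in> orth g Kf" using subset hyp by blast
        have kkK: "kk \<in> Kf" unfolding kk_def using sumK kf by blast
        have "g w kk = 0" if "w \<in> Kf" for w
        proof -
          have "kk = v - pp" using vsum by simp
          then show ?thesis using v ppo that unfolding orth_def by (simp add: g_diffr)
        qed
        then have "g kk kk = 0" using kkK by blast
        then have "kk = 0" using g_pos by blast
        then show "v \<in> fam_sum I P" using vsum \<open>pp \<in> fam_sum I P\<close> by simp
      qed
    qed
  qed
qed

end

lemma sesq_real: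
  assumes "vector_space (scale :: real \<Rightarrow> 'v \<Rightarrow> 'v)" "is_inner_product scale (\<lambda>x. x) (g :: 'v::ab_group_add \<Rightarrow> 'v \<Rightarrow> real)"
  shows "sesq scale (\<lambda>x. x) g"
proof -
  have gl: "g (scale a x + y) z = a * g x z + g y z" for a x y z
    using assms(2) unfolding is_inner_product_def by blast
  have gs: "g x y = (\<lambda>x. x) (g y x)" for x y
    using assms(2) unfolding is_inner_product_def by blast
  show ?thesis
  unfolding sesq_def sesq_axioms_def
proof (intro conjI allI impI)
  show "vector_space scale" by fact
  fix x :: 'v assume "x \<noteq> 0"
  then obtain r :: real where "r > 0" "g x x = of_real r" using assms(2) unfolding is_inner_product_def by blast
  then show "g x x \<noteq> 0" by simp
qed (rule gl | rule gs | simp)+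
qed

lemma sesq_complex:
  assumes "vector_space (scale :: complex \<Rightarrow> 'w \<Rightarrow> 'w)" "is_inner_product scale cnj (g :: 'w::ab_group_add \<Rightarrow> 'w \<Rightarrow> complex)"
  shows "sesq scale cnj g"
proof -
  have gl: "g (scale a x + y) z = a * g x z + g y z" for a x y z
    using assms(2) unfolding is_inner_product_def by blast
  have gs: "g x y = cnj (g y x)" for x y
    using assms(2) unfolding is_inner_product_def by blast
  show ?thesis
  unfolding sesq_def sesq_axioms_def
proof (intro conjI allI impI)
  show "vector_space scale" by fact
  fix x :: 'w assume "x \<noteq> 0"
  then obtain r :: real where "r > 0" "g x x = of_real r" using assms(2) unfolding is_inner_product_def by blast
  then show "g x x \<noteq> 0" by simp
qed (rule gl | rule gs | simp)+
qed

theorem lemma3p19: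
  shows "(\<forall>(scale :: real \<Rightarrow> 'v::ab_group_add \<Rightarrow> 'v) (g :: 'v \<Rightarrow> 'v \<Rightarrow> real) f (I :: 'i set) H.
            vector_space scale \<and> is_inner_product scale (\<lambda>x. x) g \<and>
            Vector_Spaces.linear scale scale f \<and>
            (\<forall>i\<in>I. fin_dim_subspace scale (H i) \<and> f ` H i \<subseteq> H i) \<and>
            is_direct_sum I H \<longrightarrow>
            (fam_sum I (\<lambda>i. orth_in g (H i) (rker f (H i))) = orth g (rker f UNIV) \<longleftrightarrow>
             (\<forall>i\<in>I. orth_in g (H i) (rker f (H i))
                       \<subseteq> orth g (fam_sum (I - {i}) (\<lambda>j. rker f (H j))))))
       \<and>
         (\<forall>(scale :: complex \<Rightarrow> 'w::ab_group_add \<Rightarrow> 'w) (g :: 'w \<Rightarrow> 'w \<Rightarrow> complex) f (I :: 'j set) H.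
            vector_space scale \<and> is_inner_product scale cnj g \<and>
            Vector_Spaces.linear scale scale f \<and>
            (\<forall>i\<in>I. fin_dim_subspace scale (H i) \<and> f ` H i \<subseteq> H i) \<and>
            is_direct_sum I H \<longrightarrow>
            (fam_sum I (\<lambda>i. orth_in g (H i) (rker f (H i))) = orth g (rker f UNIV) \<longleftrightarrow>
             (\<forall>i\<in>I. orth_in g (H i) (rker f (H i))
                       \<subseteq> orth g (fam_sum (I - {i}) (\<lambda>j. rker f (H j))))))"
proof (intro conjI allI impI)
  fix scale :: "real \<Rightarrow> 'v \<Rightarrow> 'v" and g :: "'v \<Rightarrow> 'v \<Rightarrow> real" and f and I :: "'i set" and H
  assume a: "vector_space scale \<and> is_inner_product scale (\<lambda>x. x) g \<and>
            Vector_Spaces.linear scale scale f \<and>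
            (\<forall>i\<in>I. fin_dim_subspace scale (H i) \<and> f ` H i \<subseteq> H i) \<and>
            is_direct_sum I H"
  from a have v: "vector_space scale" and ip: "is_inner_product scale (\<lambda>x. x) g"
    and l: "Vector_Spaces.linear scale scale f"
    and h: "\<forall>i\<in>I. fin_dim_subspace scale (H i) \<and> f ` H i \<subseteq> H i"
    and d: "is_direct_sum I H" by simp_all
  show "fam_sum I (\<lambda>i. orth_in g (H i) (rker f (H i))) = orth g (rker f UNIV) \<longleftrightarrow>
             (\<forall>i\<in>I. orth_in g (H i) (rker f (H i))
                       \<subseteq> orth g (fam_sum (I - {i}) (\<lambda>j. rker f (H j))))"
    by (rule sesq.main[OF sesq_real[OF v ip] l h d])
next
  fix scale :: "complex \<Rightarrow> 'w \<Rightarrow> 'w" and g :: "'w \<Rightarrow> 'w \<Rightarrow> complex" and f and I :: "'j set" and H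
  assume a: "vector_space scale \<and> is_inner_product scale cnj g \<and>
            Vector_Spaces.linear scale scale f \<and>
            (\<forall>i\<in>I. fin_dim_subspace scale (H i) \<and> f ` H i \<subseteq> H i) \<and>
            is_direct_sum I H"
  from a have v: "vector_space scale" and ip: "is_inner_product scale cnj g"
    and l: "Vector_Spaces.linear scale scale f"
    and h: "\<forall>i\<in>I. fin_dim_subspace scale (H i) \<and> f ` H i \<subseteq> H i"
    and d: "is_direct_sum I H" by simp_all
  show "fam_sum I (\<lambda>i. orth_in g (H i) (rker f (H i))) = orth g (rker f UNIV) \<longleftrightarrow>
             (\<forall>i\<in>I. orth_in g (H i) (rker f (H i))
                       \<subseteq> orth g (fam_sum (I - {i}) (\<lambda>j. rker f (H j))))"
    by (rule sesq.main[OF sesq_complex[OF v ip] l h d])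
qed

end
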